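(* Let $P$ be a convex polygon with no two edges parallel. For any LMAP $Q$ in $P$, at least one of the following holds: (a) $Q$ has an anchored narrow corner; (b) $Q$ has an anchored broad corner that has at least one adjacent corner anchored; (c) all four corners of $Q$ are even.
   Context: $P$ is a compact convex polygon with boundary $\partial P$, edges $e_1,\ldots,e_n$ clockwise and vertices $v_1,\ldots,v_n$, $e_i$ the open segment from $v_i$ to $v_{i+1}$ (indices mod $n$). $\ell_i$ is the line containing $e_i$, $\mathsf{I}_{i,j}=\ell_i\cap\ell_j$. For distinct edges, $e_i\prec e_j$ means $\mathsf{I}_{i,j}=v_i+t(v_{i+1}-v_i)$ for some $t\ge1$ (equivalently the clockwise turning angle from direction $v_{i+1}-v_i$ to $v_{j+1}-v_j$ is in $(0,\pi)$). A unit is an edge or a vertex of $P$; for $X\in\partial P$, $\mathbf{u}(X)$ is the unique unit containing $X$. For a vertex $v_i$, $back(v_i)=e_{i-1}$, $forw(v_i)=e_i$; for an edge $e$, $back(e)=forw(e)=e$. A unit $u$ is chasing a unit $u'$ if $back(u)\prec back(u')$ and $forw(u)\prec forw(u')$. For a parallelogram $A_0A_1A_2A_3$ inscribed in $P$ (corners on $\partial P$, in clockwise order, subscripts mod 4), corner $A_i$ is narrow if $\mathbf{u}(A_{i-1})$ is chasing $\mathbf{u}(A_{i+1})$; broad if $\mathbf{u}(A_{i+1})$ is chasing $\mathbf{u}(A_{i-1})$; even if neither of $\mathbf{u}(A_{i+1}),\mathbf{u}(A_{i-1})$ is chasing the other. A corner is anchored if it coincides with a vertex of $P$. A parallelogram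 lies in $P$ if its corners lie in $P$; $A_0A_1A_2A_3$ lying in $P$ is locally maximal if there is $\delta>0$ such that every parallelogram $B_0B_1B_2B_3$ lying in $P$ with $|A_iB_i|<\delta$ for all $i$ has area at most that of $A_0A_1A_2A_3$; it is slidable if two corners lie in the same open edge. An LMAP is a locally maximal non-slidable parallelogram lying in $P$ (every LMAP is inscribed). *)

theory Defs
  imports "HOL-Analysis.Analysis"
begin

type_synonym point = "real \<times> real"

text \<open>2D cross product; positive iff the turn from a to b is counterclockwise.\<close>
definition cross :: "point \<Rightarrow> point \<Rightarrow> real" where
  "cross a b = fst a * snd b - snd a * fst b"

text \<open>A polygon is given by n vertices v 0, ..., v (n-1) (indices taken mod n).\<close>
definition convex_polygon_cw :: "(nat \<Rightarrow> point) \<Rightarrow> nat \<Rightarrow> bool" where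
  "convex_polygon_cw v n \<longleftrightarrow> n \<ge> 3 \<and>
     (\<forall>i<n. \<forall>j<n. j \<noteq> i \<and> j \<noteq> Suc i mod n \<longrightarrow>
        cross (v (Suc i mod n) - v i) (v j - v i) < 0)"

definition polygon :: "(nat \<Rightarrow> point) \<Rightarrow> nat \<Rightarrow> point set" where
  "polygon v n = convex hull (v ` {..<n})"

definition edge_dir :: "(nat \<Rightarrow> point) \<Rightarrow> nat \<Rightarrow> nat \<Rightarrow> point" where
  "edge_dir v n i = v (Suc i mod n) - v i"

definition edge :: "(nat \<Rightarrow> point) \<Rightarrow> nat \<Rightarrow> nat \<Rightarrow> point set" where
  "edge v n i = open_segment (v i) (v (Suc i mod n))"

definition edge_line :: "(nat \<Rightarrow> point) \<Rightarrow> nat \<Rightarrow> nat \<Rightarrow> point set" where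
  "edge_line v n i = {v i + s *\<^sub>R edge_dir v n i | s. True}"

definition no_parallel_edges :: "(nat \<Rightarrow> point) \<Rightarrow> nat \<Rightarrow> bool" where
  "no_parallel_edges v n \<longleftrightarrow>
     (\<forall>i<n. \<forall>j<n. i \<noteq> j \<longrightarrow> cross (edge_dir v n i) (edge_dir v n j) \<noteq> 0)"

definition prec :: "(nat \<Rightarrow> point) \<Rightarrow> nat \<Rightarrow> nat \<Rightarrow> nat \<Rightarrow> bool" where
  "prec v n i j \<longleftrightarrow> i \<noteq> j \<and>
     (\<exists>t\<ge>1. edge_line v n i \<inter> edge_line v n j = {v i + t *\<^sub>R edge_dir v n i})"

datatype punit = Vert nat | Edge nat

definition unit_of :: "(nat \<Rightarrow> point) \<Rightarrow> nat \<Rightarrow> point \<Rightarrow> punit \<Rightarrow> bool" where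
  "unit_of v n X u \<longleftrightarrow>
     (\<exists>i<n. (u = Vert i \<and> X = v i) \<or> (u = Edge i \<and> X \<in> edge v n i))"

fun back_e :: "nat \<Rightarrow> punit \<Rightarrow> nat" where
  "back_e n (Vert i) = (i + n - 1) mod n"
| "back_e n (Edge i) = i"

fun forw_e :: "nat \<Rightarrow> punit \<Rightarrow> nat" where
  "forw_e n (Vert i) = i"
| "forw_e n (Edge i) = i"

definition chasing :: "(nat \<Rightarrow> point) \<Rightarrow> nat \<Rightarrow> punit \<Rightarrow> punit \<Rightarrow> bool" where
  "chasing v n u u' \<longleftrightarrow> prec v n (back_e n u) (back_e n u') \<and> prec v n (forw_e n u) (forw_e n u')"

text \<open>Parallelograms A 0 A 1 A 2 A 3 (corner indices mod 4), non-degenerate, in clockwise order.\<close>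
definition parallelogram :: "(nat \<Rightarrow> point) \<Rightarrow> bool" where
  "parallelogram A \<longleftrightarrow> A 0 + A 2 = A 1 + A 3 \<and> cross (A 1 - A 0) (A 3 - A 0) < 0"

definition par_area :: "(nat \<Rightarrow> point) \<Rightarrow> real" where
  "par_area A = \<bar>cross (A 1 - A 0) (A 3 - A 0)\<bar>"

definition lies_in :: "(nat \<Rightarrow> point) \<Rightarrow> point set \<Rightarrow> bool" where
  "lies_in A S \<longleftrightarrow> (\<forall>i<4. A i \<in> S)"

definition locally_maximal :: "(nat \<Rightarrow> point) \<Rightarrow> nat \<Rightarrow> (nat \<Rightarrow> point) \<Rightarrow> bool" where
  "locally_maximal v n A \<longleftrightarrow> parallelogram A \<and> lies_in A (polygon v n) \<and>
     (\<exists>\<delta>>0. \<forall>B. parallelogram B \<and> lies_in B (polygon v n) \<and> (\<forall>i<4. dist (A i) (B i) < \<delta>)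
        \<longrightarrow> par_area B \<le> par_area A)"

definition slidable :: "(nat \<Rightarrow> point) \<Rightarrow> nat \<Rightarrow> (nat \<Rightarrow> point) \<Rightarrow> bool" where
  "slidable v n A \<longleftrightarrow> (\<exists>i<4. \<exists>j<4. \<exists>k<n. i \<noteq> j \<and> A i \<in> edge v n k \<and> A j \<in> edge v n k)"

definition LMAP :: "(nat \<Rightarrow> point) \<Rightarrow> nat \<Rightarrow> (nat \<Rightarrow> point) \<Rightarrow> bool" where
  "LMAP v n A \<longleftrightarrow> locally_maximal v n A \<and> \<not> slidable v n A"

definition anchored :: "(nat \<Rightarrow> point) \<Rightarrow> nat \<Rightarrow> (nat \<Rightarrow> point) \<Rightarrow> nat \<Rightarrow> bool" where
  "anchored v n A i \<longleftrightarrow> (\<exists>k<n. A (i mod 4) = v k)"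

definition narrow :: "(nat \<Rightarrow> point) \<Rightarrow> nat \<Rightarrow> (nat \<Rightarrow> point) \<Rightarrow> nat \<Rightarrow> bool" where
  "narrow v n A i \<longleftrightarrow> (\<exists>u u'. unit_of v n (A ((i + 3) mod 4)) u \<and>
      unit_of v n (A ((i + 1) mod 4)) u' \<and> chasing v n u u')"

definition broad :: "(nat \<Rightarrow> point) \<Rightarrow> nat \<Rightarrow> (nat \<Rightarrow> point) \<Rightarrow> nat \<Rightarrow> bool" where
  "broad v n A i \<longleftrightarrow> (\<exists>u u'. unit_of v n (A ((i + 3) mod 4)) u \<and>
      unit_of v n (A ((i + 1) mod 4)) u' \<and> chasing v n u' u)"

definition even_corner :: "(nat \<Rightarrow> point) \<Rightarrow> nat \<Rightarrow> (nat \<Rightarrow> point) \<Rightarrow> nat \<Rightarrow> bool" where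
  "even_corner v n A i \<longleftrightarrow> (\<exists>u u'. unit_of v n (A ((i + 3) mod 4)) u \<and>
      unit_of v n (A ((i + 1) mod 4)) u' \<and> \<not> chasing v n u u' \<and> \<not> chasing v n u' u)"

end

theory Submission
  imports Defs
begin


lemma cross_inner: "cross d b = inner (- snd d, fst d) b"
  by (cases d; cases b) (simp add: cross_def)

lemma cross_diff_right: "cross a (b - c) = cross a b - cross a c"
  by (simp add: cross_def algebra_simps)

lemma cross_self[simp]: "cross a a = 0"
  by (simp add: cross_def)

lemma halfplane_convex: "convex {X. cross d (X - p) \<le> 0}"
proof -
  have "{X. cross d (X - p) \<le> 0} = {X. inner (- snd d, fst d) X \<le> cross d p}"
    by (auto simp: cross_diff_right cross_inner[symmetric])
  then show ?thesis by (simp add: convex_halfspace_le)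
qed

lemma poly_n3: "convex_polygon_cw v n \<Longrightarrow> n \<ge> 3"
  by (simp add: convex_polygon_cw_def)

lemma poly_strict:
  assumes "convex_polygon_cw v n" "i < n" "j < n" "j \<noteq> i" "j \<noteq> Suc i mod n"
  shows "cross (edge_dir v n i) (v j - v i) < 0"
  using assms by (simp add: convex_polygon_cw_def edge_dir_def)

lemma vert_half:
  assumes "convex_polygon_cw v n" "k < n" "j < n"
  shows "cross (edge_dir v n k) (v j - v k) \<le> 0"
proof (cases "j = k \<or> j = Suc k mod n")
  case True
  then show ?thesis by (auto simp: edge_dir_def cross_def)
next
  case False
  then show ?thesis using poly_strict[OF assms(1,2,3)] by force
qed

lemma H1:
  assumes "convex_polygon_cw v n" "k < n" "X \<in> polygon v n"
  shows "cross (edge_dir v n k) (X - v k) \<le> 0"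
proof -
  have "convex hull (v ` {..<n}) \<subseteq> {X. cross (edge_dir v n k) (X - v k) \<le> 0}"
    by (rule hull_minimal) (auto intro: vert_half[OF assms(1,2)] halfplane_convex)
  then show ?thesis using assms(3) by (auto simp: polygon_def)
qed

lemma suc_mod: "(k::nat) < n \<Longrightarrow> Suc k mod n = (if Suc k = n then 0 else Suc k)"
  by auto

lemma prev_mod: "(k::nat) < n \<Longrightarrow> (k + n - 1) mod n = (if k = 0 then n - 1 else k - 1)"
proof -
  assume k: "k < n"
  show ?thesis
  proof (cases "k = 0")
    case True
    have "n - 1 < n" using k by arith
    then show ?thesis using True by simp
  next
    case False
    then have e: "k + n - 1 = (k - 1) + n" by simp
    have "(k + n - 1) mod n = ((k - 1) + n) mod n" by (simp only: e)
    also have "\<dots> = (k - 1) mod n" by (rule mod_add_self2)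
    also have "\<dots> = k - 1" using k by simp
    finally show ?thesis using False by simp
  qed
qed

lemma suc_prev: "(k::nat) < n \<Longrightarrow> Suc ((k + n - 1) mod n) mod n = k"
proof -
  assume k: "k < n"
  show ?thesis
  proof (cases "k = 0")
    case True
    then have "Suc ((k + n - 1) mod n) = n" using prev_mod[OF k] k by simp
    then show ?thesis using True by simp
  next
    case False
    then have "Suc ((k + n - 1) mod n) = k" using prev_mod[OF k] k by simp
    then show ?thesis using k by simp
  qed
qed

lemma prev_lt: "(k::nat) < n \<Longrightarrow> (k + n - 1) mod n < n"
proof -
  assume "k < n"
  then have "0 < n" by arith
  then show ?thesis by simp
qed

lemma edge_dir_nz:
  assumes "convex_polygon_cw v n" "k < n"
  shows "edge_dir v n k \<noteq> 0"
proof
  assume z: "edge_dir v n k = 0"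
  have n3: "n \<ge> 3" using poly_n3[OF assms(1)] .
  define j where "j = Suc (Suc k) mod n"
  have "j < n" using assms(2) by (simp add: j_def)
  moreover have "j \<noteq> k" "j \<noteq> Suc k mod n"
    using assms(2) n3 unfolding j_def
    by (auto simp: mod_Suc split: if_splits)
  ultimately have "cross (edge_dir v n k) (v j - v k) < 0"
    using poly_strict[OF assms(1,2)] by blast
  then show False using z by (simp add: cross_def)
qed

lemma turn:
  assumes "convex_polygon_cw v n" "k < n"
  shows "cross (edge_dir v n k) (edge_dir v n (Suc k mod n)) < 0"
proof -
  have n3: "n \<ge> 3" using poly_n3[OF assms(1)] .
  define j where "j = Suc (Suc k) mod n"
  have jn: "j < n" using assms(2) by (simp add: j_def)
  moreover have "j \<noteq> k" "j \<noteq> Suc k mod n"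
    using assms(2) n3 unfolding j_def
    by (auto simp: mod_Suc split: if_splits)
  ultimately have c: "cross (edge_dir v n k) (v j - v k) < 0"
    using poly_strict[OF assms(1,2)] by blast
  have "Suc (Suc k mod n) mod n = j" unfolding j_def by (simp add: mod_Suc)
  then have "edge_dir v n (Suc k mod n) = (v j - v k) - edge_dir v n k"
    by (simp add: edge_dir_def)
  then show ?thesis using c by (simp add: cross_diff_right)
qed

lemma key_ineq:
  fixes a1 a2 y1 y2 e11 e12 e21 e22 :: real
  assumes "e21*y2 - e22*y1 \<le> 0" "e11*y2 - e12*y1 \<le> 0" "e11*e22 - e12*e21 < 0"
    "a1*e11 + a2*e12 \<le> 0" "a1*e21 + a2*e22 \<ge> 0"
  shows "a1*y1 + a2*y2 \<ge> 0"
proof -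
  have id: "(a1*y1 + a2*y2) * (e11*e22 - e12*e21)
      = (-(e21*y2 - e22*y1)) * (a1*e11 + a2*e12) + (e11*y2 - e12*y1) * (a1*e21 + a2*e22)"
    by (simp add: algebra_simps)
  have "(-(e21*y2 - e22*y1)) * (a1*e11 + a2*e12) \<le> 0"
    using assms(1,4) by (simp add: mult_nonneg_nonpos)
  moreover have "(e11*y2 - e12*y1) * (a1*e21 + a2*e22) \<le> 0"
    using assms(2,5) by (simp add: mult_nonpos_nonneg)
  ultimately have "(a1*y1 + a2*y2) * (e11*e22 - e12*e21) \<le> 0" using id by linarith
  then show ?thesis using assms(3) by (simp add: mult_le_0_iff)
qed

lemma Hc:
  assumes cv: "convex_polygon_cw v n" and X: "\<forall>k<n. cross (edge_dir v n k) (X - v k) \<le> 0"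
  shows "X \<in> polygon v n"
proof (rule ccontr)
  assume nX: "X \<notin> polygon v n"
  have n3: "n \<ge> 3" using poly_n3[OF cv] .
  have "convex (polygon v n)" by (simp add: polygon_def convex_convex_hull)
  moreover have "closed (polygon v n)"
    by (simp add: polygon_def compact_imp_closed finite_imp_compact_convex_hull)
  ultimately obtain a b where ab: "inner a X < b" "\<forall>x\<in>polygon v n. inner a x > b"
    using separating_hyperplane_closed_point nX by blast
  have vin: "v k \<in> polygon v n" if "k < n" for k
    using that by (auto simp: polygon_def intro!: hull_inc)
  have "0 \<in> {..<n}" using n3 by simp
  then have ne: "{..<n} \<noteq> {}" by blast
  obtain m where m: "m \<in> {..<n}" "\<not> (\<exists>x\<in>{..<n}. inner a (v x) < inner a (v m))"
    using ex_is_arg_min_if_finite[OF _ ne, of "\<lambda>k. inner a (v k)"]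
    unfolding is_arg_min_def by blast
  have mn: "m < n" using m by simp
  define p where "p = (m + n - 1) mod n"
  have pn: "p < n" using prev_lt[OF mn] unfolding p_def .
  have sp: "Suc p mod n = m" using suc_prev[OF mn] by (simp add: p_def)
  define m1 where "m1 = Suc m mod n"
  have m1n: "m1 < n" using mn by (simp add: m1_def)
  define Y where "Y = X - v m"
  define e1 where "e1 = edge_dir v n p"
  define e2 where "e2 = edge_dir v n m"
  have e1d: "e1 = v m - v p" by (simp add: e1_def edge_dir_def sp)
  have e2d: "e2 = v m1 - v m" by (simp add: e2_def edge_dir_def m1_def)
  have c1: "cross e2 Y \<le> 0" using X mn by (simp add: e2_def Y_def)
  have "cross e1 (X - v p) \<le> 0" using X pn by (simp add: e1_def)
  moreover have "X - v p = Y + e1" by (simp add: Y_def e1d)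
  ultimately have c2: "cross e1 Y \<le> 0" by (simp add: cross_def algebra_simps)
  have c3: "cross e1 e2 < 0" using turn[OF cv pn] by (simp add: e1_def e2_def sp)
  have "inner a (v m) \<le> inner a (v p)" using m(2) pn by (meson lessThan_iff not_less)
  then have i1: "inner a e1 \<le> 0" by (simp add: e1d inner_diff_right)
  have "inner a (v m) \<le> inner a (v m1)" using m(2) m1n by (meson lessThan_iff not_less)
  then have i2: "inner a e2 \<ge> 0" by (simp add: e2d inner_diff_right)
  have "inner a Y \<ge> 0"
    using key_ineq[of "fst e2" "snd Y" "snd e2" "fst Y" "fst e1" "snd e1" "fst a" "snd a"]
      c1 c2 c3 i1 i2
    by (cases a; cases Y; cases e1; cases e2) (simp add: cross_def)
  then have "inner a X \<ge> inner a (v m)" by (simp add: Y_def inner_diff_right)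
  moreover have "inner a (v m) > b" using ab(2) vin[OF mn] by blast
  ultimately show False using ab(1) by linarith
qed



lemma on_line:
  assumes "cross d Y = 0" "d \<noteq> 0"
  shows "\<exists>t. Y = t *\<^sub>R d"
proof (cases "fst d = 0")
  case False
  have "Y = (fst Y / fst d) *\<^sub>R d"
    using assms False by (cases Y; cases d) (auto simp: cross_def field_simps)
  then show ?thesis by blast
next
  case True
  then have "snd d \<noteq> 0" using assms(2) by (cases d) (auto simp: zero_prod_def)
  then have "Y = (snd Y / snd d) *\<^sub>R d"
    using assms True by (cases Y; cases d) (auto simp: cross_def field_simps)
  then show ?thesis by blast
qed

lemma cross_add_right: "cross a (b + c) = cross a b + cross a c"
  by (simp add: cross_def algebra_simps)
lemma cross_scaleR_right: "cross a (t *\<^sub>R b) = t * cross a b"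
  by (simp add: cross_def algebra_simps)
lemma cross_anti: "cross a b = - cross b a"
  by (simp add: cross_def algebra_simps)

lemma prec_imp_cross:
  assumes cv: "convex_polygon_cw v n" and np: "no_parallel_edges v n"
    and ij: "i < n" "j < n" and pr: "prec v n i j"
  shows "cross (edge_dir v n i) (edge_dir v n j) < 0"
proof -
  from pr obtain t where t: "t \<ge> 1" "i \<noteq> j"
    "edge_line v n i \<inter> edge_line v n j = {v i + t *\<^sub>R edge_dir v n i}"
    by (auto simp: prec_def)
  then have "v i + t *\<^sub>R edge_dir v n i \<in> edge_line v n j" by blast
  then obtain s where s: "v i + t *\<^sub>R edge_dir v n i = v j + s *\<^sub>R edge_dir v n j"
    by (auto simp: edge_line_def)
  have "cross (edge_dir v n j) ((v i - v j) + t *\<^sub>R edge_dir v n i) = 0"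
  proof -
    have "(v i - v j) + t *\<^sub>R edge_dir v n i = s *\<^sub>R edge_dir v n j"
      using s by (simp add: algebra_simps)
    then show ?thesis by (simp add: cross_scaleR_right)
  qed
  then have e: "cross (edge_dir v n j) (v i - v j) + t * cross (edge_dir v n j) (edge_dir v n i) = 0"
    by (simp add: cross_add_right cross_scaleR_right)
  have g0: "cross (edge_dir v n j) (v i - v j) \<le> 0" using vert_half[OF cv ij(2,1)] .
  have c0: "cross (edge_dir v n j) (edge_dir v n i) \<noteq> 0"
    using np ij t(2) by (auto simp: no_parallel_edges_def)
  have "cross (edge_dir v n j) (edge_dir v n i) > 0"
  proof (rule ccontr)
    assume "\<not> ?thesis"
    then have "cross (edge_dir v n j) (edge_dir v n i) < 0" using c0 by linarith
    then have "t * cross (edge_dir v n j) (edge_dir v n i) < 0" using t(1)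
      by (simp add: mult_pos_neg)
    then show False using e g0 by linarith
  qed
  then show ?thesis using cross_anti by (metis neg_less_0_iff_less)
qed

lemma cross_imp_prec:
  assumes cv: "convex_polygon_cw v n"
    and ij: "i < n" "j < n" "i \<noteq> j" and cr: "cross (edge_dir v n i) (edge_dir v n j) < 0"
  shows "prec v n i j"
proof -
  define c where "c = cross (edge_dir v n j) (edge_dir v n i)"
  have cpos: "c > 0" using cr cross_anti unfolding c_def by (metis neg_0_less_iff_less)
  define g0 where "g0 = cross (edge_dir v n j) (v i - v j)"
  define t where "t = - g0 / c"
  have "cross (edge_dir v n j) (v (Suc i mod n) - v j) \<le> 0"
    using vert_half[OF cv ij(2)] ij(1) by simp
  moreover have "v (Suc i mod n) - v j = (v i - v j) + edge_dir v n i"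
    by (simp add: edge_dir_def)
  ultimately have "g0 + c \<le> 0" by (simp add: g0_def c_def cross_add_right)
  then have t1: "t \<ge> 1" using cpos by (simp add: t_def field_simps)
  have tc: "g0 + t * c = 0" using cpos by (simp add: t_def)
  have "edge_line v n i \<inter> edge_line v n j = {v i + t *\<^sub>R edge_dir v n i}"
  proof (intro equalityI subsetI)
    fix Z assume "Z \<in> edge_line v n i \<inter> edge_line v n j"
    then have "\<exists>a. Z = v i + a *\<^sub>R edge_dir v n i" "\<exists>s. Z = v j + s *\<^sub>R edge_dir v n j"
      by (auto simp: edge_line_def)
    then obtain a s where a: "Z = v i + a *\<^sub>R edge_dir v n i" "Z = v j + s *\<^sub>R edge_dir v n j"
      by blast
    then have "(v i - v j) + a *\<^sub>R edge_dir v n i = s *\<^sub>R edge_dir v n j"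
      by (simp add: algebra_simps)
    then have "cross (edge_dir v n j) ((v i - v j) + a *\<^sub>R edge_dir v n i) = 0"
      by (simp add: cross_scaleR_right)
    then have "g0 + a * c = 0" by (simp add: g0_def c_def cross_add_right cross_scaleR_right)
    then have "a = t" using tc cpos by (metis add_left_cancel mult_right_cancel less_irrefl)
    then show "Z \<in> {v i + t *\<^sub>R edge_dir v n i}" using a by simp
  next
    fix Z assume "Z \<in> {v i + t *\<^sub>R edge_dir v n i}"
    then have Z: "Z = v i + t *\<^sub>R edge_dir v n i" by simp
    have "cross (edge_dir v n j) (Z - v j) = 0"
      using tc by (simp add: Z g0_def c_def cross_add_right cross_scaleR_right
          cross_diff_right algebra_simps)
    moreover have "edge_dir v n j \<noteq> 0" using edge_dir_nz[OF cv ij(2)] .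
    ultimately obtain s where "Z - v j = s *\<^sub>R edge_dir v n j" using on_line by blast
    then have "Z = v j + s *\<^sub>R edge_dir v n j" by (simp add: algebra_simps)
    then show "Z \<in> edge_line v n i \<inter> edge_line v n j" using Z unfolding edge_line_def by blast
  qed
  then show ?thesis using t1 ij(3) by (auto simp: prec_def)
qed



lemma on_closed_edge:
  assumes cv: "convex_polygon_cw v n" and k: "k < n" and X: "X \<in> polygon v n"
    and z: "cross (edge_dir v n k) (X - v k) = 0"
  shows "\<exists>u. unit_of v n X u"
proof -
  obtain t where t: "X - v k = t *\<^sub>R edge_dir v n k"
    using on_line[OF z edge_dir_nz[OF cv k]] by blast
  define k1 where "k1 = Suc k mod n"
  have k1n: "k1 < n" using k by (simp add: k1_def)
  have "cross (edge_dir v n k1) (X - v k1) \<le> 0" using H1[OF cv k1n X] .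
  moreover have "X - v k1 = (t - 1) *\<^sub>R edge_dir v n k"
    using t by (simp add: k1_def edge_dir_def algebra_simps)
  ultimately have "(t - 1) * cross (edge_dir v n k1) (edge_dir v n k) \<le> 0"
    by (simp add: cross_scaleR_right)
  moreover have "cross (edge_dir v n k1) (edge_dir v n k) > 0"
    using turn[OF cv k] cross_anti unfolding k1_def by (metis neg_0_less_iff_less)
  ultimately have t1: "t \<le> 1" by (simp add: mult_le_0_iff)
  define p where "p = (k + n - 1) mod n"
  have pn: "p < n" using prev_lt[OF k] by (simp add: p_def)
  have sp: "Suc p mod n = k" using suc_prev[OF k] by (simp add: p_def)
  have "cross (edge_dir v n p) (X - v p) \<le> 0" using H1[OF cv pn X] .
  moreover have "X - v p = edge_dir v n p + t *\<^sub>R edge_dir v n k"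
    using t by (simp add: edge_dir_def sp algebra_simps)
  ultimately have "t * cross (edge_dir v n p) (edge_dir v n k) \<le> 0"
    by (simp add: cross_scaleR_right cross_add_right)
  moreover have "cross (edge_dir v n p) (edge_dir v n k) < 0"
    using turn[OF cv pn] by (simp add: sp)
  ultimately have t0: "t \<ge> 0" by (simp add: mult_le_0_iff)
  show ?thesis
  proof (cases "t = 0")
    case True
    then have "X = v k" using t by simp
    then have "unit_of v n X (Vert k)" using k by (auto simp: unit_of_def)
    then show ?thesis by blast
  next
    case False
    show ?thesis
    proof (cases "t = 1")
      case True
      then have "X = v k1" using t by (simp add: k1_def edge_dir_def algebra_simps)
      then have "unit_of v n X (Vert k1)" using k1n by (auto simp: unit_of_def)
      then show ?thesis by blast
    next
      case False2: False
      have "v k \<noteq> v (Suc k mod n)" using edge_dir_nz[OF cv k] by (simp add: edge_dir_def)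
      moreover have "X = (1 - t) *\<^sub>R v k + t *\<^sub>R v (Suc k mod n)"
        using t by (simp add: edge_dir_def algebra_simps)
      moreover have "0 < t" "t < 1" using t0 t1 False False2 by auto
      ultimately have "X \<in> edge v n k" unfolding edge_def in_segment by blast
      then have "unit_of v n X (Edge k)" using k by (auto simp: unit_of_def)
      then show ?thesis by blast
    qed
  qed
qed

lemma no_unit_ball:
  assumes cv: "convex_polygon_cw v n" and X: "X \<in> polygon v n"
    and nu: "\<not> (\<exists>u. unit_of v n X u)"
  shows "\<exists>e>0. ball X e \<subseteq> polygon v n"
proof -
  define S where "S = (\<Inter>k\<in>{..<n}. {Y. inner (- snd (edge_dir v n k), fst (edge_dir v n k)) Y
     < cross (edge_dir v n k) (v k)})"
  have eqS: "Y \<in> S \<longleftrightarrow> (\<forall>k<n. cross (edge_dir v n k) (Y - v k) < 0)" for Y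
    by (auto simp: S_def cross_diff_right cross_inner[symmetric])
  have "open S" unfolding S_def
    by (intro open_INT finite_lessThan ballI open_halfspace_lt)
  moreover have "X \<in> S"
  proof -
    have "cross (edge_dir v n k) (X - v k) < 0" if "k < n" for k
    proof -
      have "cross (edge_dir v n k) (X - v k) \<le> 0" using H1[OF cv that X] .
      moreover have "cross (edge_dir v n k) (X - v k) \<noteq> 0"
        using on_closed_edge[OF cv that X] nu by blast
      ultimately show ?thesis by linarith
    qed
    then show ?thesis using eqS by blast
  qed
  ultimately obtain e where e: "e > 0" "ball X e \<subseteq> S" using open_contains_ball by blast
  have "S \<subseteq> polygon v n"
  proof
    fix Y assume "Y \<in> S"
    then show "Y \<in> polygon v n" using Hc[OF cv] eqS less_imp_le by blast
  qed
  then show ?thesis using e by blast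
qed



lemma edge_sub: "convex_polygon_cw v n \<Longrightarrow> k < n \<Longrightarrow> edge v n k \<subseteq> polygon v n"
proof -
  assume k: "k < n"
  have "v k \<in> polygon v n" "v (Suc k mod n) \<in> polygon v n"
    using k by (auto simp: polygon_def intro!: hull_inc)
  then have "closed_segment (v k) (v (Suc k mod n)) \<subseteq> polygon v n"
    unfolding polygon_def by (rule closed_segment_subset_convex_hull)
  then show ?thesis unfolding edge_def using open_closed_segment by blast
qed

lemma edge_half:
  assumes cv: "convex_polygon_cw v n" and k: "k < n" and A: "A \<in> edge v n k"
    and X: "X \<in> polygon v n"
  shows "cross (edge_dir v n k) (X - A) \<le> 0"
proof -
  obtain t where "A = (1 - t) *\<^sub>R v k + t *\<^sub>R v (Suc k mod n)"
    using A unfolding edge_def in_segment by blast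
  then have "A - v k = t *\<^sub>R edge_dir v n k" by (simp add: edge_dir_def algebra_simps)
  then have "cross (edge_dir v n k) (A - v k) = 0" by (simp add: cross_scaleR_right)
  moreover have "X - A = (X - v k) - (A - v k)" by simp
  ultimately show ?thesis using H1[OF cv k X] by (simp add: cross_diff_right)
qed

lemma slide:
  assumes A: "A \<in> edge v n k"
  shows "\<exists>\<eta>>0. \<forall>e. \<bar>e\<bar> < \<eta> \<longrightarrow> A + e *\<^sub>R edge_dir v n k \<in> edge v n k"
proof -
  obtain t where t: "v k \<noteq> v (Suc k mod n)" "0 < t" "t < 1"
    "A = (1 - t) *\<^sub>R v k + t *\<^sub>R v (Suc k mod n)"
    using A unfolding edge_def in_segment by blast
  define \<eta> where "\<eta> = min t (1 - t)"
  have "\<eta> > 0" using t by (simp add: \<eta>_def)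
  moreover have "A + e *\<^sub>R edge_dir v n k \<in> edge v n k" if "\<bar>e\<bar> < \<eta>" for e
  proof -
    have "A + e *\<^sub>R edge_dir v n k = (1 - (t + e)) *\<^sub>R v k + (t + e) *\<^sub>R v (Suc k mod n)"
      using t(4) by (simp add: edge_dir_def algebra_simps)
    moreover have "0 < t + e" "t + e < 1" using that by (auto simp: \<eta>_def)
    ultimately show ?thesis unfolding edge_def in_segment using t(1) by blast
  qed
  ultimately show ?thesis by blast
qed

lemma perturb_contra:
  assumes LM: "locally_maximal v n A" and eta: "\<eta> > 0"
    and sm: "m 0 + m 2 = m 1 + m 3"
    and H: "\<And>e. 0 < e \<Longrightarrow> e < \<eta> \<Longrightarrow> lies_in (\<lambda>i. A i + e *\<^sub>R m i) (polygon v n) \<and>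
        cross ((A 1 + e *\<^sub>R m 1) - (A 0 + e *\<^sub>R m 0)) ((A 3 + e *\<^sub>R m 3) - (A 0 + e *\<^sub>R m 0))
        < cross (A 1 - A 0) (A 3 - A 0)"
  shows False
proof -
  from LM obtain \<delta> where d: "\<delta> > 0" "parallelogram A"
    "\<forall>B. parallelogram B \<and> lies_in B (polygon v n) \<and> (\<forall>i<4. dist (A i) (B i) < \<delta>)
        \<longrightarrow> par_area B \<le> par_area A"
    by (auto simp: locally_maximal_def)
  define M where "M = 1 + norm (m 0) + norm (m 1) + norm (m 2) + norm (m 3)"
  have M: "M > 0" "norm (m i) \<le> M" if "i < 4" for i
  proof -
    show "M > 0" by (simp add: M_def add_pos_nonneg)
    have "i = 0 \<or> i = 1 \<or> i = 2 \<or> i = 3" using that by auto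
    then show "norm (m i) \<le> M" by (auto simp: M_def)
  qed
  define e where "e = min \<eta> (\<delta> / M) / 2"
  have Mp: "M > 0" using M(1)[of 0] by simp
  have e0: "e > 0" using eta d(1) Mp by (simp add: e_def)
  have e1: "e < \<eta>" using eta d(1) Mp by (simp add: e_def)
  have e2: "e * M < \<delta>"
  proof -
    have "e \<le> (\<delta> / M) / 2" by (simp add: e_def)
    then have "e * M \<le> (\<delta> / M) / 2 * M" using Mp by (intro mult_right_mono) auto
    also have "\<dots> = \<delta> / 2" using Mp by simp
    finally show ?thesis using d(1) by simp
  qed
  define B where "B = (\<lambda>i. A i + e *\<^sub>R m i)"
  from H[OF e0 e1] have HB: "lies_in B (polygon v n)"
    "cross (B 1 - B 0) (B 3 - B 0) < cross (A 1 - A 0) (A 3 - A 0)"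
    by (simp_all add: B_def)
  have sm2: "e *\<^sub>R m 0 + e *\<^sub>R m 2 = e *\<^sub>R m 1 + e *\<^sub>R m 3"
    using sm by (metis scaleR_right_distrib)
  have "B 0 + B 2 = B 1 + B 3"
  proof -
    have "B 0 + B 2 = (A 0 + A 2) + (e *\<^sub>R m 0 + e *\<^sub>R m 2)" by (simp add: B_def algebra_simps)
    also have "\<dots> = (A 1 + A 3) + (e *\<^sub>R m 1 + e *\<^sub>R m 3)"
      using d(2) sm2 by (simp add: parallelogram_def)
    also have "\<dots> = B 1 + B 3" by (simp add: B_def algebra_simps)
    finally show ?thesis .
  qed
  then have pB: "parallelogram B"
    using d(2) HB(2) by (simp add: parallelogram_def)
  have "dist (A i) (B i) < \<delta>" if "i < 4" for i
  proof -
    have "dist (A i) (B i) = e * norm (m i)" using e0 by (simp add: B_def dist_norm)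
    also have "\<dots> \<le> e * M" using M(2)[OF that] e0 by simp
    finally show ?thesis using e2 by simp
  qed
  then have "par_area B \<le> par_area A" using d(3) pB HB(1) by blast
  moreover have "par_area B > par_area A"
    using d(2) HB(2) by (simp add: par_area_def parallelogram_def)
  ultimately show False by simp
qed



lemma cross_id4: "cross a b * cross c d = cross a c * cross b d - cross a d * cross b c"
  by (simp add: cross_def algebra_simps)

lemma cross_minus_right: "cross a (- b) = - cross a b"
  by (simp add: cross_def)

lemma cross_expand: "cross (u - x) (w - y) = cross u w - cross u y - cross x w + cross x y"
  by (simp add: cross_def algebra_simps)

lemma cross_scaleR_left: "cross (t *\<^sub>R a) b = t * cross a b"
  by (simp add: cross_def algebra_simps)

lemma decomp2: "cross p q *\<^sub>R r = cross r q *\<^sub>R p + cross p r *\<^sub>R q"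
  by (cases p; cases q; cases r) (simp add: cross_def algebra_simps)

lemma lies_in4: "lies_in B S \<longleftrightarrow> B 0 \<in> S \<and> B 1 \<in> S \<and> B 2 \<in> S \<and> B 3 \<in> S"
proof -
  have "(\<forall>i<4. B i \<in> S) \<longleftrightarrow> B 0 \<in> S \<and> B 1 \<in> S \<and> B 2 \<in> S \<and> B 3 \<in> S"
  proof
    assume "\<forall>i<4. B i \<in> S" then show "B 0 \<in> S \<and> B 1 \<in> S \<and> B 2 \<in> S \<and> B 3 \<in> S" by simp
  next
    assume h: "B 0 \<in> S \<and> B 1 \<in> S \<and> B 2 \<in> S \<and> B 3 \<in> S"
    show "\<forall>i<4. B i \<in> S"
    proof (intro allI impI)
      fix i :: nat assume "i < 4"
      then have "i = 0 \<or> i = 1 \<or> i = 2 \<or> i = 3" by auto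
      then show "B i \<in> S" using h by auto
    qed
  qed
  then show ?thesis by (simp add: lies_in_def)
qed

lemma Inscr0:
  assumes cv: "convex_polygon_cw v n" and LM: "locally_maximal v n A"
  shows "\<exists>u. unit_of v n (A 0) u"
proof (rule ccontr)
  assume nu: "\<not> ?thesis"
  have pA: "parallelogram A" and lA: "lies_in A (polygon v n)"
    using LM by (auto simp: locally_maximal_def)
  then have A0: "A 0 \<in> polygon v n" and A1: "A 1 \<in> polygon v n"
    and A2: "A 2 \<in> polygon v n" and A3: "A 3 \<in> polygon v n" by (auto simp: lies_in4)
  obtain r where r: "r > 0" "ball (A 0) r \<subseteq> polygon v n"
    using no_unit_ball[OF cv A0 nu] by blast
  define u where "u = A 1 - A 0"
  define w where "w = A 3 - A 0"
  have c0: "cross u w < 0" using pA by (simp add: parallelogram_def u_def w_def)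
  define pp where "pp = (- snd u, fst u)"
  have cup: "cross u pp = fst u * fst u + snd u * snd u" by (simp add: pp_def cross_def)
  have "u \<noteq> 0" using c0 by (auto simp: cross_def)
  then have cup_pos: "cross u pp > 0" unfolding cup
    by (cases u) (auto simp: zero_prod_def sum_squares_gt_zero_iff)
  then have ppnz: "pp \<noteq> 0" by (auto simp: cross_def)
  define s where "s = r / (2 * norm pp)"
  have s0: "s > 0" using r ppnz by (simp add: s_def)
  define \<rho> where "\<rho> = s *\<^sub>R pp"
  have nrho: "norm \<rho> = r / 2" using ppnz r(1) by (simp add: \<rho>_def s_def)
  have Ar: "A 0 + \<rho> \<in> polygon v n"
    using r nrho by (intro subsetD[OF r(2)]) (simp add: dist_norm)
  define z where "z = A 0 + \<rho> - A 1"
  have cuz: "cross u z > 0"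
  proof -
    have "z = \<rho> - u" by (simp add: z_def u_def)
    then have "cross u z = s * cross u pp" by (simp add: cross_diff_right \<rho>_def cross_scaleR_right)
    then show ?thesis using s0 cup_pos by simp
  qed
  define m where "m = (\<lambda>i::nat. if i = 0 \<or> i = 1 then z else 0)"
  define \<eta> where "\<eta> = min 1 (r / (2 * (norm z + 1)))"
  have "2 * (norm z + 1) > 0" by (simp add: add_nonneg_pos)
  then have eta: "\<eta> > 0" using r by (simp add: \<eta>_def)
  show False
  proof (rule perturb_contra[OF LM eta, of m])
    show "m 0 + m 2 = m 1 + m 3" by (simp add: m_def)
  next
    fix e :: real assume e: "0 < e" "e < \<eta>"
    have e1: "e \<le> 1" using e by (simp add: \<eta>_def)
    have "e < r / (2 * (norm z + 1))" using e by (simp add: \<eta>_def)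
    then have "e * (2 * (norm z + 1)) < r" by (simp add: field_simps add_pos_nonneg)
    then have ez: "e * norm z < r" using e(1) by (smt (verit) mult_left_mono norm_ge_zero)
    have B0: "A 0 + e *\<^sub>R z \<in> polygon v n"
      using ez e(1) by (intro subsetD[OF r(2)]) (simp add: dist_norm)
    have "A 1 + e *\<^sub>R z = (1 - e) *\<^sub>R A 1 + e *\<^sub>R (A 0 + \<rho>)"
      by (simp add: z_def algebra_simps)
    moreover have "convex (polygon v n)" by (simp add: polygon_def convex_convex_hull)
    ultimately have B1: "A 1 + e *\<^sub>R z \<in> polygon v n"
      using A1 Ar e(1) e1 by (metis convexD diff_add_cancel diff_ge_0_iff_ge less_imp_le)
    show "lies_in (\<lambda>i. A i + e *\<^sub>R m i) (polygon v n) \<and>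
        cross (A 1 + e *\<^sub>R m 1 - (A 0 + e *\<^sub>R m 0)) (A 3 + e *\<^sub>R m 3 - (A 0 + e *\<^sub>R m 0))
        < cross (A 1 - A 0) (A 3 - A 0)"
    proof
      show "lies_in (\<lambda>i. A i + e *\<^sub>R m i) (polygon v n)"
        using B0 B1 A2 A3 by (simp add: lies_in4 m_def)
      have "A 1 + e *\<^sub>R m 1 - (A 0 + e *\<^sub>R m 0) = u" by (simp add: m_def u_def)
      moreover have "A 3 + e *\<^sub>R m 3 - (A 0 + e *\<^sub>R m 0) = w - e *\<^sub>R z"
        by (simp add: m_def w_def)
      ultimately have "cross (A 1 + e *\<^sub>R m 1 - (A 0 + e *\<^sub>R m 0)) (A 3 + e *\<^sub>R m 3 - (A 0 + e *\<^sub>R m 0))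
          = cross u w - e * cross u z" by (simp add: cross_diff_right cross_scaleR_right)
      moreover have "e * cross u z > 0" using e(1) cuz by simp
      ultimately show "cross (A 1 + e *\<^sub>R m 1 - (A 0 + e *\<^sub>R m 0)) (A 3 + e *\<^sub>R m 3 - (A 0 + e *\<^sub>R m 0))
        < cross (A 1 - A 0) (A 3 - A 0)" by (simp add: u_def w_def)
    qed
  qed
qed



lemma KeyN0:
  assumes cv: "convex_polygon_cw v n" and np: "no_parallel_edges v n" and L: "LMAP v n A"
    and k: "kr < n" "kp < n" "kq < n"
    and E0: "A 0 \<in> edge v n kr" and E1: "A 1 \<in> edge v n kp" and E3: "A 3 \<in> edge v n kq"
    and pq: "prec v n kq kp"
  shows False
proof -
  have LM: "locally_maximal v n A" and ns: "\<not> slidable v n A" using L by (auto simp: LMAP_def)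
  have pA: "parallelogram A" and lA: "lies_in A (polygon v n)"
    using LM by (auto simp: locally_maximal_def)
  then have A0: "A 0 \<in> polygon v n" and A1: "A 1 \<in> polygon v n"
    and A2: "A 2 \<in> polygon v n" and A3: "A 3 \<in> polygon v n" by (auto simp: lies_in4)
  have krp: "kr \<noteq> kp"
  proof
    assume "kr = kp"
    then have "slidable v n A" using E0 E1 k unfolding slidable_def
      by (metis one_less_numeral_iff semiring_norm(76) zero_less_numeral zero_neq_one)
    then show False using ns by simp
  qed
  have krq: "kr \<noteq> kq"
  proof
    assume "kr = kq"
    moreover have "(0::nat) < 4" "(3::nat) < 4" "(0::nat) \<noteq> 3" by auto
    ultimately have "slidable v n A" using E0 E3 k unfolding slidable_def by blast
    then show False using ns by simp
  qed
  define r where "r = edge_dir v n kr"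
  define p where "p = edge_dir v n kp"
  define q where "q = edge_dir v n kq"
  define u where "u = A 1 - A 0"
  define w where "w = A 3 - A 0"
  have c0: "cross u w < 0" using pA by (simp add: parallelogram_def u_def w_def)
  have A2e: "A 2 = A 1 + A 3 - A 0" using pA by (simp add: parallelogram_def algebra_simps)
  have ru: "cross r u \<le> 0" using edge_half[OF cv k(1) E0 A1] by (simp add: r_def u_def)
  have rw: "cross r w \<le> 0" using edge_half[OF cv k(1) E0 A3] by (simp add: r_def w_def)
  have "cross p (A 0 - A 1) \<le> 0" using edge_half[OF cv k(2) E1 A0] by (simp add: p_def)
  then have pu: "cross p u \<ge> 0"
    by (simp add: u_def cross_def algebra_simps)
  have "cross p (A 2 - A 1) \<le> 0" using edge_half[OF cv k(2) E1 A2] by (simp add: p_def)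
  then have pw: "cross p w \<le> 0" by (simp add: A2e w_def)
  have "cross q (A 0 - A 3) \<le> 0" using edge_half[OF cv k(3) E3 A0] by (simp add: q_def)
  then have qw: "cross q w \<ge> 0" by (simp add: w_def cross_def algebra_simps)
  have "cross q (A 2 - A 3) \<le> 0" using edge_half[OF cv k(3) E3 A2] by (simp add: q_def)
  then have qu: "cross q u \<le> 0" by (simp add: A2e u_def)
  have "cross r q * cross u w \<le> 0"
  proof -
    have "cross r q * cross u w = cross r u * cross q w - cross r w * cross q u" by (rule cross_id4)
    moreover have "cross r u * cross q w \<le> 0" using ru qw by (simp add: mult_nonpos_nonneg)
    moreover have "cross r w * cross q u \<ge> 0" using rw qu by (simp add: mult_nonpos_nonpos)
    ultimately show ?thesis by linarith
  qed
  moreover have "cross r q \<noteq> 0" using np k krq by (simp add: no_parallel_edges_def r_def q_def)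
  ultimately have rq: "cross r q > 0" using c0
    by (metis less_eq_real_def mult_le_0_iff not_less)
  have "cross p r * cross u w \<le> 0"
  proof -
    have "cross p r * cross u w = cross p u * cross r w - cross p w * cross r u" by (rule cross_id4)
    moreover have "cross p u * cross r w \<le> 0" using pu rw by (simp add: mult_nonneg_nonpos)
    moreover have "cross p w * cross r u \<ge> 0" using pw ru by (simp add: mult_nonpos_nonpos)
    ultimately show ?thesis by linarith
  qed
  moreover have "cross p r \<noteq> 0" using np k krp by (auto simp: no_parallel_edges_def r_def p_def)
  ultimately have prr: "cross p r > 0" using c0
    by (metis less_eq_real_def mult_le_0_iff not_less)
  have "cross q p < 0" using prec_imp_cross[OF cv np k(3) k(2) pq] by (simp add: p_def q_def)
  then have D: "cross p q > 0" using cross_anti[of q p] by simp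
  define \<alpha> where "\<alpha> = cross r q / cross p q"
  define \<beta> where "\<beta> = cross p r / cross p q"
  have a0: "\<alpha> > 0" using rq D by (simp add: \<alpha>_def)
  have b0: "\<beta> > 0" using prr D by (simp add: \<beta>_def)
  have rdec: "r = \<alpha> *\<^sub>R p + \<beta> *\<^sub>R q"
  proof -
    have "cross p q *\<^sub>R r = cross p q *\<^sub>R (\<alpha> *\<^sub>R p + \<beta> *\<^sub>R q)"
      using D by (simp add: decomp2[of p q r] \<alpha>_def \<beta>_def scaleR_add_right)
    then show ?thesis using D by simp
  qed
  define Lc where "Lc = \<alpha> * cross u p + \<beta> * cross q w"
  define \<sigma> :: real where "\<sigma> = (if Lc \<ge> 0 then 1 else -1)"
  have sL: "\<sigma> * Lc \<ge> 0" by (simp add: \<sigma>_def)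
  have s2: "\<sigma> * \<sigma> = 1" by (simp add: \<sigma>_def)
  have sabs: "\<bar>\<sigma>\<bar> = 1" by (simp add: \<sigma>_def)
  obtain \<eta>r where \<eta>r: "\<eta>r > 0" "\<forall>e. \<bar>e\<bar> < \<eta>r \<longrightarrow> A 0 + e *\<^sub>R r \<in> edge v n kr"
    using slide[OF E0] by (auto simp: r_def)
  obtain \<eta>p where \<eta>p: "\<eta>p > 0" "\<forall>e. \<bar>e\<bar> < \<eta>p \<longrightarrow> A 1 + e *\<^sub>R p \<in> edge v n kp"
    using slide[OF E1] by (auto simp: p_def)
  obtain \<eta>q where \<eta>q: "\<eta>q > 0" "\<forall>e. \<bar>e\<bar> < \<eta>q \<longrightarrow> A 3 + e *\<^sub>R q \<in> edge v n kq"
    using slide[OF E3] by (auto simp: q_def)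
  define m where "m = (\<lambda>i::nat. if i = 0 then \<sigma> *\<^sub>R r else if i = 1 then (\<sigma> * \<alpha>) *\<^sub>R p
     else if i = 3 then (\<sigma> * \<beta>) *\<^sub>R q else 0)"
  define \<eta> where "\<eta> = min \<eta>r (min (\<eta>p / \<alpha>) (\<eta>q / \<beta>))"
  have eta: "\<eta> > 0" using \<eta>r \<eta>p \<eta>q a0 b0 by (simp add: \<eta>_def)
  show False
  proof (rule perturb_contra[OF LM eta, of m])
    show "m 0 + m 2 = m 1 + m 3"
      using rdec by (simp add: m_def scaleR_add_right)
  next
    fix e :: real assume e: "0 < e" "e < \<eta>"
    have "\<bar>e * \<sigma>\<bar> < \<eta>r" using e sabs by (simp add: \<eta>_def abs_mult)
    then have B0: "A 0 + e *\<^sub>R m 0 \<in> polygon v n"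
      using \<eta>r(2) edge_sub[OF cv k(1)] by (auto simp: m_def)
    have "e < \<eta>p / \<alpha>" using e by (simp add: \<eta>_def)
    then have "e * \<alpha> < \<eta>p" using a0 by (simp add: field_simps)
    then have "\<bar>e * (\<sigma> * \<alpha>)\<bar> < \<eta>p" using e a0 sabs by (simp add: abs_mult)
    then have B1: "A 1 + e *\<^sub>R m 1 \<in> polygon v n"
      using \<eta>p(2) edge_sub[OF cv k(2)] by (auto simp: m_def)
    have "e < \<eta>q / \<beta>" using e by (simp add: \<eta>_def)
    then have "e * \<beta> < \<eta>q" using b0 by (simp add: field_simps)
    then have "\<bar>e * (\<sigma> * \<beta>)\<bar> < \<eta>q" using e b0 sabs by (simp add: abs_mult)
    then have B3: "A 3 + e *\<^sub>R m 3 \<in> polygon v n"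
      using \<eta>q(2) edge_sub[OF cv k(3)] by (auto simp: m_def)
    define E where "E = e * \<sigma>"
    have d1: "A 1 + e *\<^sub>R m 1 - (A 0 + e *\<^sub>R m 0) = u - (E * \<beta>) *\<^sub>R q"
    proof -
      have "A 1 + e *\<^sub>R m 1 - (A 0 + e *\<^sub>R m 0) = u + E *\<^sub>R (\<alpha> *\<^sub>R p - r)"
        by (simp add: m_def u_def E_def algebra_simps)
      also have "\<alpha> *\<^sub>R p - r = - (\<beta> *\<^sub>R q)" using rdec by simp
      finally show ?thesis by simp
    qed
    have d3: "A 3 + e *\<^sub>R m 3 - (A 0 + e *\<^sub>R m 0) = w - (E * \<alpha>) *\<^sub>R p"
    proof -
      have "A 3 + e *\<^sub>R m 3 - (A 0 + e *\<^sub>R m 0) = w + E *\<^sub>R (\<beta> *\<^sub>R q - r)"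
        by (simp add: m_def w_def E_def algebra_simps)
      also have "\<beta> *\<^sub>R q - r = - (\<alpha> *\<^sub>R p)" using rdec by simp
      finally show ?thesis by simp
    qed
    have cx: "cross (u - (E * \<beta>) *\<^sub>R q) (w - (E * \<alpha>) *\<^sub>R p)
        = cross u w - E * Lc + (E * E) * (\<alpha> * \<beta> * cross q p)"
      unfolding cross_expand Lc_def
      by (simp add: cross_scaleR_left cross_scaleR_right algebra_simps)
    have "E * Lc \<ge> 0" using sL e by (simp add: E_def mult.assoc)
    moreover have "(E * E) * (\<alpha> * \<beta> * cross q p) < 0"
    proof -
      have "E * E > 0" using e s2 by (simp add: E_def) (metis mult.commute mult.left_commute
            mult_1_right mult_pos_pos)
      moreover have "\<alpha> * \<beta> * cross q p < 0" using a0 b0 D cross_anti[of q p]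
        by (simp add: mult_pos_neg)
      ultimately show ?thesis by (simp add: mult_pos_neg)
    qed
    ultimately have "cross (u - (E * \<beta>) *\<^sub>R q) (w - (E * \<alpha>) *\<^sub>R p) < cross u w"
      using cx by linarith
    then have X: "cross (A 1 + e *\<^sub>R m 1 - (A 0 + e *\<^sub>R m 0)) (A 3 + e *\<^sub>R m 3 - (A 0 + e *\<^sub>R m 0))
        < cross u w" unfolding d1 d3 .
    have "lies_in (\<lambda>i. A i + e *\<^sub>R m i) (polygon v n)"
      using B0 B1 B3 A2 by (simp add: lies_in4 m_def)
    then show "lies_in (\<lambda>i. A i + e *\<^sub>R m i) (polygon v n) \<and>
        cross (A 1 + e *\<^sub>R m 1 - (A 0 + e *\<^sub>R m 0)) (A 3 + e *\<^sub>R m 3 - (A 0 + e *\<^sub>R m 0))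
        < cross (A 1 - A 0) (A 3 - A 0)"
      using X[unfolded u_def w_def] by blast
  qed
qed



definition rotk :: "nat \<Rightarrow> (nat \<Rightarrow> point) \<Rightarrow> nat \<Rightarrow> point" where
  "rotk k A = (\<lambda>j. A ((j + k) mod 4))"

lemma mod4_add: "((a::nat) mod 4 + k) mod 4 = (a + k) mod 4"
  by (rule mod_add_left_eq)

lemma rotk_rotk: "rotk a (rotk b A) = rotk (a + b) A"
proof (rule ext)
  fix j
  have "((j + a) mod 4 + b) mod 4 = (j + (a + b)) mod 4"
    by (simp add: mod4_add add.assoc)
  then show "rotk a (rotk b A) j = rotk (a + b) A j" by (simp add: rotk_def)
qed

lemma rotk_4: "rotk (1 + (1 + (1 + 1))) A = rotk 0 A"
  by (rule ext) (simp add: rotk_def)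

lemma rotk_Suc: "rotk (Suc k) A = rotk 1 (rotk k A)"
  by (simp add: rotk_rotk)

lemma par_rot1:
  assumes "parallelogram B"
  shows "parallelogram (rotk 1 B) \<and> par_area (rotk 1 B) = par_area B"
proof -
  have s: "B 0 + B 2 = B 1 + B 3" and c: "cross (B 1 - B 0) (B 3 - B 0) < 0"
    using assms by (auto simp: parallelogram_def)
  have r: "rotk 1 B 0 = B 1" "rotk 1 B 1 = B 2" "rotk 1 B 2 = B 3" "rotk 1 B 3 = B 0"
  proof -
    have "(0+1) mod 4 = (1::nat)" "(1+1) mod 4 = (2::nat)" "(2+1) mod 4 = (3::nat)"
      "(3+1) mod 4 = (0::nat)" by simp_all
    then show "rotk 1 B 0 = B 1" "rotk 1 B 1 = B 2" "rotk 1 B 2 = B 3" "rotk 1 B 3 = B 0"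
      by (simp_all only: rotk_def)
  qed
  have e1: "B 2 - B 1 = B 3 - B 0" using s by (simp add: algebra_simps)
  have e2: "cross (B 2 - B 1) (B 0 - B 1) = cross (B 1 - B 0) (B 3 - B 0)"
    unfolding e1 by (simp add: cross_def algebra_simps)
  show ?thesis unfolding parallelogram_def par_area_def r using s c e2 by (simp add: algebra_simps)
qed

lemma lt4: "(i::nat) < 4 \<Longrightarrow> i = 0 \<or> i = 1 \<or> i = 2 \<or> i = 3" by auto

lemma rot1_LMAP:
  assumes L: "LMAP v n A"
  shows "LMAP v n (rotk 1 A)"
proof -
  have LM: "locally_maximal v n A" and ns: "\<not> slidable v n A" using L by (auto simp: LMAP_def)
  from LM obtain \<delta> where d: "\<delta> > 0" "parallelogram A" "lies_in A (polygon v n)"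
    "\<forall>B. parallelogram B \<and> lies_in B (polygon v n) \<and> (\<forall>i<4. dist (A i) (B i) < \<delta>)
        \<longrightarrow> par_area B \<le> par_area A"
    by (auto simp: locally_maximal_def)
  have pR: "parallelogram (rotk 1 A)" "par_area (rotk 1 A) = par_area A"
    using par_rot1[OF d(2)] by auto
  have lR: "lies_in (rotk 1 A) (polygon v n)"
    using d(3) by (simp add: lies_in_def rotk_def)
  have "par_area B \<le> par_area (rotk 1 A)"
    if B: "parallelogram B" "lies_in B (polygon v n)" "\<forall>i<4. dist (rotk 1 A i) (B i) < \<delta>" for B
  proof -
    define B' where "B' = rotk 1 (rotk 1 (rotk 1 B))"
    have B'e: "B' = (\<lambda>j. B ((j + 3) mod 4))"
      unfolding B'_def rotk_rotk by (simp add: rotk_def add.commute)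
    have q1: "parallelogram (rotk 1 B)" "par_area (rotk 1 B) = par_area B"
      using par_rot1[OF B(1)] by auto
    have q2: "parallelogram (rotk 1 (rotk 1 B))" "par_area (rotk 1 (rotk 1 B)) = par_area B"
      using par_rot1[OF q1(1)] q1(2) by auto
    have pB': "parallelogram B'" "par_area B' = par_area B"
      using par_rot1[OF q2(1)] q2(2) unfolding B'_def by auto
    have lB': "lies_in B' (polygon v n)" using B(2) by (simp add: lies_in_def B'e)
    have "dist (A j) (B' j) < \<delta>" if "j < 4" for j
    proof -
      have "(j + 3) mod 4 < 4" by simp
      then have "dist (rotk 1 A ((j + 3) mod 4)) (B ((j + 3) mod 4)) < \<delta>" using B(3) by blast
      moreover have "rotk 1 A ((j + 3) mod 4) = A j"
      proof -
        have "((j + 3) mod 4 + 1) mod 4 = (j + 3 + 1) mod 4" by (rule mod4_add)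
        also have "(j + 3 + 1) mod 4 = j" using that by simp
        finally show ?thesis by (simp only: rotk_def)
      qed
      ultimately show ?thesis by (simp add: B'e)
    qed
    then have "par_area B' \<le> par_area A" using d(4) pB'(1) lB' by blast
    then show ?thesis using pB' pR by simp
  qed
  then have "locally_maximal v n (rotk 1 A)"
    using pR lR d(1) by (auto simp: locally_maximal_def)
  moreover have "\<not> slidable v n (rotk 1 A)"
  proof
    assume "slidable v n (rotk 1 A)"
    then obtain i j k where ij: "i < 4" "j < 4" "k < n" "i \<noteq> j"
      "A ((i + 1) mod 4) \<in> edge v n k" "A ((j + 1) mod 4) \<in> edge v n k"
      by (auto simp: slidable_def rotk_def)
    have "i \<in> {0,1,2,3}" "j \<in> {0,1,2,3}" using ij(1,2) by auto
    then have "(i + 1) mod 4 \<noteq> (j + 1) mod 4" using ij(4) by auto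
    then have "slidable v n A" using ij unfolding slidable_def
      by (meson mod_less_divisor zero_less_numeral)
    then show False using ns by simp
  qed
  ultimately show ?thesis by (simp add: LMAP_def)
qed

lemma rotk_LMAP: "LMAP v n A \<Longrightarrow> LMAP v n (rotk k A)"
proof (induction k)
  case 0
  have "rotk 0 A = (\<lambda>j. A (j mod 4))" by (simp add: rotk_def)
  have "LMAP v n (rotk 1 (rotk 1 (rotk 1 (rotk 1 A))))"
    using 0 by (intro rot1_LMAP)
  moreover have "rotk 1 (rotk 1 (rotk 1 (rotk 1 A))) = rotk 0 A"
    by (simp only: rotk_rotk rotk_4)
  ultimately show ?case by simp
next
  case (Suc k)
  then have "LMAP v n (rotk k A)" by blast
  then show ?case unfolding rotk_Suc[of k A] by (rule rot1_LMAP)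
qed

lemma anch_rot: "anchored v n (rotk k A) j = anchored v n A (j + k)"
  by (simp add: anchored_def rotk_def mod_add_left_eq)

lemma narrow_rot: "narrow v n (rotk k A) j = narrow v n A (j + k)"
proof -
  have "((j + 3) mod 4 + k) mod 4 = (j + 3 + k) mod 4" "((j + 1) mod 4 + k) mod 4 = (j + 1 + k) mod 4"
    by (rule mod4_add)+
  then have "((j + 3) mod 4 + k) mod 4 = (j + k + 3) mod 4" "((j + 1) mod 4 + k) mod 4 = (j + k + 1) mod 4"
    by (simp_all add: ac_simps)
  then show ?thesis by (simp add: narrow_def rotk_def)
qed

lemma broad_rot: "broad v n (rotk k A) j = broad v n A (j + k)"
proof -
  have "((j + 3) mod 4 + k) mod 4 = (j + 3 + k) mod 4" "((j + 1) mod 4 + k) mod 4 = (j + 1 + k) mod 4"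
    by (rule mod4_add)+
  then have "((j + 3) mod 4 + k) mod 4 = (j + k + 3) mod 4" "((j + 1) mod 4 + k) mod 4 = (j + k + 1) mod 4"
    by (simp_all add: ac_simps)
  then show ?thesis by (simp add: broad_def rotk_def)
qed

lemma even_rot: "even_corner v n (rotk k A) j = even_corner v n A (j + k)"
proof -
  have "((j + 3) mod 4 + k) mod 4 = (j + 3 + k) mod 4" "((j + 1) mod 4 + k) mod 4 = (j + 1 + k) mod 4"
    by (rule mod4_add)+
  then have "((j + 3) mod 4 + k) mod 4 = (j + k + 3) mod 4" "((j + 1) mod 4 + k) mod 4 = (j + k + 1) mod 4"
    by (simp_all add: ac_simps)
  then show ?thesis by (simp add: even_corner_def rotk_def)
qed

lemma anch_mod: "anchored v n A (x mod 4) = anchored v n A x"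
  by (simp add: anchored_def)

lemma narrow_mod: "narrow v n A (x mod 4) = narrow v n A x"
proof -
  have "((x mod 4) + 3) mod 4 = (x + 3) mod 4" "((x mod 4) + 1) mod 4 = (x + 1) mod 4"
    by (rule mod4_add)+
  then show ?thesis unfolding narrow_def by (simp only:)
qed

lemma broad_mod: "broad v n A (x mod 4) = broad v n A x"
proof -
  have "((x mod 4) + 3) mod 4 = (x + 3) mod 4" "((x mod 4) + 1) mod 4 = (x + 1) mod 4"
    by (rule mod4_add)+
  then show ?thesis unfolding broad_def by (simp only:)
qed

lemma even_mod: "even_corner v n A (x mod 4) = even_corner v n A x"
proof -
  have "((x mod 4) + 3) mod 4 = (x + 3) mod 4" "((x mod 4) + 1) mod 4 = (x + 1) mod 4"
    by (rule mod4_add)+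
  then show ?thesis unfolding even_corner_def by (simp only:)
qed

definition GoalP where
  "GoalP v n A \<longleftrightarrow> (\<exists>i<4. anchored v n A i \<and> narrow v n A i)
       \<or> (\<exists>i<4. anchored v n A i \<and> broad v n A i
              \<and> (anchored v n A (i + 1) \<or> anchored v n A (i + 3)))
       \<or> (\<forall>i<4. even_corner v n A i)"

lemma goal_rot:
  assumes "GoalP v n (rotk k A)"
  shows "GoalP v n A"
proof -
  consider (a) j where "j < 4" "anchored v n (rotk k A) j" "narrow v n (rotk k A) j"
    | (b) j where "j < 4" "anchored v n (rotk k A) j" "broad v n (rotk k A) j"
        "anchored v n (rotk k A) (j + 1) \<or> anchored v n (rotk k A) (j + 3)"
    | (c) "\<forall>j<4. even_corner v n (rotk k A) j"
    using assms unfolding GoalP_def by blast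
  then show ?thesis
  proof cases
    case a
    define i where "i = (j + k) mod 4"
    have "i < 4" "anchored v n A i" "narrow v n A i"
      using a by (simp_all add: i_def anch_rot narrow_rot anch_mod narrow_mod)
    then show ?thesis unfolding GoalP_def by blast
  next
    case b
    define i where "i = (j + k) mod 4"
    have "(i + 1) mod 4 = (j + 1 + k) mod 4" "(i + 3) mod 4 = (j + 3 + k) mod 4"
    proof -
      have "(i + 1) mod 4 = (j + k + 1) mod 4" "(i + 3) mod 4 = (j + k + 3) mod 4"
        unfolding i_def by (rule mod4_add)+
      then show "(i + 1) mod 4 = (j + 1 + k) mod 4" "(i + 3) mod 4 = (j + 3 + k) mod 4"
        by (simp_all add: ac_simps)
    qed
    then have "anchored v n A (i + 1) = anchored v n A (j + 1 + k)"
         "anchored v n A (i + 3) = anchored v n A (j + 3 + k)"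
      by (metis anch_mod)+
    then have "i < 4" "anchored v n A i" "broad v n A i"
       "anchored v n A (i + 1) \<or> anchored v n A (i + 3)"
      using b by (simp_all add: i_def anch_rot broad_rot anch_mod broad_mod)
    then show ?thesis unfolding GoalP_def by blast
  next
    case c
    have "even_corner v n A i" if "i < 4" for i
    proof -
      define j where "j = (i + 3 * k) mod 4"
      have "j < 4" by (simp add: j_def)
      then have "even_corner v n A (j + k)" using c by (simp add: even_rot)
      moreover have "(j + k) mod 4 = i"
      proof -
        have "(j + k) mod 4 = (i + 3 * k + k) mod 4" unfolding j_def by (rule mod4_add)
        also have "i + 3 * k + k = i + k * 4" by simp
        also have "(i + k * 4) mod 4 = i" using that by simp
        finally show ?thesis .
      qed
      ultimately show ?thesis by (metis even_mod)
    qed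
    then show ?thesis unfolding GoalP_def by blast
  qed
qed



lemma unit_cases:
  assumes "unit_of v n X u"
  shows "(\<exists>k<n. u = Vert k \<and> X = v k) \<or> (\<exists>k<n. u = Edge k \<and> X \<in> edge v n k)"
  using assms by (auto simp: unit_of_def)

lemma InscrAll:
  assumes cv: "convex_polygon_cw v n" and L: "LMAP v n A"
  shows "\<exists>u. unit_of v n (A (j mod 4)) u"
proof -
  have "LMAP v n (rotk j A)" using rotk_LMAP[OF L] .
  then have "locally_maximal v n (rotk j A)" by (simp add: LMAP_def)
  from Inscr0[OF cv this] show ?thesis by (simp add: rotk_def)
qed

lemma chasing_EE: "chasing v n (Edge a) (Edge b) \<longleftrightarrow> prec v n a b"
  by (simp add: chasing_def)

lemma narrow0: "narrow v n A 0 \<longleftrightarrow> (\<exists>u u'. unit_of v n (A 3) u \<and> unit_of v n (A 1) u' \<and> chasing v n u u')"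
proof -
  have "(0+3) mod 4 = (3::nat)" "(0+1) mod 4 = (1::nat)" by simp_all
  then show ?thesis unfolding narrow_def by (simp only:)
qed
lemma narrow1: "narrow v n A 1 \<longleftrightarrow> (\<exists>u u'. unit_of v n (A 0) u \<and> unit_of v n (A 2) u' \<and> chasing v n u u')"
proof -
  have "(1+3) mod 4 = (0::nat)" "(1+1) mod 4 = (2::nat)" by simp_all
  then show ?thesis unfolding narrow_def by (simp only:)
qed
lemma narrow3: "narrow v n A 3 \<longleftrightarrow> (\<exists>u u'. unit_of v n (A 2) u \<and> unit_of v n (A 0) u' \<and> chasing v n u u')"
proof -
  have "(3+3) mod 4 = (2::nat)" "(3+1) mod 4 = (0::nat)" by simp_all
  then show ?thesis unfolding narrow_def by (simp only:)
qed
lemma broad2: "broad v n A 2 \<longleftrightarrow> (\<exists>u u'. unit_of v n (A 1) u \<and> unit_of v n (A 3) u' \<and> chasing v n u' u)"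
proof -
  have "(2+3) mod 4 = (1::nat)" "(2+1) mod 4 = (3::nat)" by simp_all
  then show ?thesis unfolding broad_def by (simp only:)
qed
lemma anch5: "anchored v n A 5 \<longleftrightarrow> anchored v n A 1"
  by (simp add: anchored_def)
lemma anch_simp: "j < 4 \<Longrightarrow> anchored v n A j \<longleftrightarrow> (\<exists>k<n. A j = v k)"
  by (simp add: anchored_def)

lemma Main0:
  assumes cv: "convex_polygon_cw v n" and np: "no_parallel_edges v n" and L: "LMAP v n A"
    and nw: "narrow v n A 0"
  shows "GoalP v n A"
proof -
  have ns: "\<not> slidable v n A" using L by (simp add: LMAP_def)
  obtain U3 U1 where U: "unit_of v n (A 3) U3" "unit_of v n (A 1) U1" "chasing v n U3 U1"
    using nw by (auto simp: narrow0)
  show ?thesis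
  proof (cases "anchored v n A 0")
    case True
    then show ?thesis using nw unfolding GoalP_def by force
  next
    case nA0: False
    obtain U0 where "unit_of v n (A 0) U0" using InscrAll[OF cv L, of 0] by auto
    then obtain kr where kr: "kr < n" "A 0 \<in> edge v n kr"
      using unit_cases nA0 by (fastforce simp: anch_simp)
    show ?thesis
    proof (cases "(\<exists>kq. U3 = Edge kq) \<and> (\<exists>kp. U1 = Edge kp)")
      case True
      then obtain kq kp where e: "U3 = Edge kq" "U1 = Edge kp" by blast
      have "kq < n" "A 3 \<in> edge v n kq" using U(1) e unit_cases by fastforce+
      moreover have "kp < n" "A 1 \<in> edge v n kp" using U(2) e unit_cases by fastforce+
      moreover have "prec v n kq kp" using U(3) e by (simp add: chasing_EE)
      ultimately have False using KeyN0[OF cv np L kr(1) _ _ kr(2)] by blast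
      then show ?thesis ..
    next
    case False
      have a31: "anchored v n A 3 \<or> anchored v n A 1"
      proof -
        have "(\<exists>k<n. U3 = Vert k \<and> A 3 = v k) \<or> (\<exists>k<n. U1 = Vert k \<and> A 1 = v k)"
          using False unit_cases[OF U(1)] unit_cases[OF U(2)] by auto
        then show ?thesis by (auto simp: anch_simp)
      qed
      show ?thesis
      proof (cases "anchored v n A 2")
        case True
        have "broad v n A 2" using U by (auto simp: broad2)
        then have "anchored v n A 2 \<and> broad v n A 2 \<and> (anchored v n A (2 + 1) \<or> anchored v n A (2 + 3))"
          using True a31 anch5 by auto
        moreover have "(2::nat) < 4" by simp
        ultimately show ?thesis unfolding GoalP_def by blast
      next
        case nA2: False
        obtain U2 where "unit_of v n (A 2) U2" using InscrAll[OF cv L, of 2] by auto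
        then obtain ks where ks: "ks < n" "A 2 \<in> edge v n ks"
          using unit_cases nA2 by (fastforce simp: anch_simp)
        have "kr \<noteq> ks"
        proof
          assume "kr = ks"
          moreover have "(0::nat) < 4" "(2::nat) < 4" "(0::nat) \<noteq> 2" by auto
          ultimately have "slidable v n A" using kr ks unfolding slidable_def by blast
          then show False using ns by simp
        qed
        then have crs: "cross (edge_dir v n kr) (edge_dir v n ks) \<noteq> 0"
          using np kr ks by (simp add: no_parallel_edges_def)
        have ukr: "unit_of v n (A 0) (Edge kr)" using kr by (auto simp: unit_of_def)
        have uks: "unit_of v n (A 2) (Edge ks)" using ks by (auto simp: unit_of_def)
        show ?thesis
        proof (cases "cross (edge_dir v n kr) (edge_dir v n ks) < 0")
          case True
          have pr: "prec v n kr ks" using cross_imp_prec[OF cv kr(1) ks(1) \<open>kr \<noteq> ks\<close> True] .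
          then have "chasing v n (Edge kr) (Edge ks)" by (simp add: chasing_EE)
          then have n1: "narrow v n A 1" unfolding narrow1 using ukr uks by blast
          show ?thesis
          proof (cases "anchored v n A 1")
            case True
            then show ?thesis using n1 unfolding GoalP_def by force
          next
            case False
            then obtain kp where kp: "kp < n" "A 1 \<in> edge v n kp"
              using unit_cases[OF U(2)] by (fastforce simp: anch_simp)
            have L1: "LMAP v n (rotk 1 A)" using rotk_LMAP[OF L] .
            have "(0+1) mod 4 = (1::nat)" "(1+1) mod 4 = (2::nat)" "(3+1) mod 4 = (0::nat)"
              by simp_all
            then have "rotk 1 A 0 = A 1" "rotk 1 A 1 = A 2" "rotk 1 A 3 = A 0"
              by (simp_all only: rotk_def)
            then have False using KeyN0[OF cv np L1 kp(1) ks(1) kr(1) _ _ _ pr] kp ks kr by simp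
            then show ?thesis ..
          qed
        next
          case False
          then have "cross (edge_dir v n ks) (edge_dir v n kr) < 0"
            using crs cross_anti[of "edge_dir v n ks" "edge_dir v n kr"] by linarith
          then have pr: "prec v n ks kr"
            using cross_imp_prec[OF cv ks(1) kr(1)] \<open>kr \<noteq> ks\<close> by auto
          then have "chasing v n (Edge ks) (Edge kr)" by (simp add: chasing_EE)
          then have n3: "narrow v n A 3" unfolding narrow3 using ukr uks by blast
          show ?thesis
          proof (cases "anchored v n A 3")
            case True
            then show ?thesis using n3 unfolding GoalP_def by force
          next
            case False
            then obtain kq where kq: "kq < n" "A 3 \<in> edge v n kq"
              using unit_cases[OF U(1)] by (fastforce simp: anch_simp)
            have L3: "LMAP v n (rotk 3 A)" using rotk_LMAP[OF L] .
            have "(0+3) mod 4 = (3::nat)" "(1+3) mod 4 = (0::nat)" "(3+3) mod 4 = (2::nat)"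
              by simp_all
            then have "rotk 3 A 0 = A 3" "rotk 3 A 1 = A 0" "rotk 3 A 3 = A 2"
              by (simp_all only: rotk_def)
            then have False using KeyN0[OF cv np L3 kq(1) kr(1) ks(1) _ _ _ pr] kq ks kr by simp
            then show ?thesis ..
          qed
        qed
      qed
    qed
  qed
qed

theorem lemma13:
  fixes v :: "nat \<Rightarrow> point" and n :: nat and A :: "nat \<Rightarrow> point"
  assumes "convex_polygon_cw v n"
    and "no_parallel_edges v n"
    and "LMAP v n A"
  shows "(\<exists>i<4. anchored v n A i \<and> narrow v n A i)
       \<or> (\<exists>i<4. anchored v n A i \<and> broad v n A i
              \<and> (anchored v n A (i + 1) \<or> anchored v n A (i + 3)))
       \<or> (\<forall>i<4. even_corner v n A i)"
proof -
  note cv = assms(1) and np = assms(2) and L = assms(3)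
  have "GoalP v n A"
  proof (cases "\<forall>i<4. even_corner v n A i")
    case True
    then show ?thesis unfolding GoalP_def by blast
  next
    case False
    then obtain i where i: "i < 4" "\<not> even_corner v n A i" by blast
    obtain Ua where Ua: "unit_of v n (A ((i + 3) mod 4)) Ua" using InscrAll[OF cv L] by blast
    obtain Ub where Ub: "unit_of v n (A ((i + 1) mod 4)) Ub" using InscrAll[OF cv L] by blast
    have "chasing v n Ua Ub \<or> chasing v n Ub Ua" using i(2) Ua Ub by (auto simp: even_corner_def)
    then obtain j where nj: "narrow v n A j"
    proof
      assume "chasing v n Ua Ub"
      then have "narrow v n A i" using Ua Ub by (auto simp: narrow_def)
      then show ?thesis using that by blast
    next
      assume c: "chasing v n Ub Ua"
      have "(i + 2 + 3) mod 4 = (i + 1) mod 4" "(i + 2 + 1) mod 4 = (i + 3) mod 4"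
      proof -
        have e: "i + 2 + 3 = (i + 1) + 4" by simp
        show "(i + 2 + 3) mod 4 = (i + 1) mod 4" by (simp only: e mod_add_self2)
        have e2: "i + 2 + 1 = i + 3" by simp
        show "(i + 2 + 1) mod 4 = (i + 3) mod 4" by (simp only: e2)
      qed
      then have "narrow v n A (i + 2)" using Ua Ub c unfolding narrow_def by metis
      then show ?thesis using that by blast
    qed
    have Lj: "LMAP v n (rotk j A)" using rotk_LMAP[OF L] .
    have "narrow v n (rotk j A) 0" using nj by (simp add: narrow_rot)
    then have "GoalP v n (rotk j A)" using Main0[OF cv np Lj] by blast
    then show ?thesis by (rule goal_rot)
  qed
  then show ?thesis unfolding GoalP_def .
qed

end
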